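(* Let $k<n$ be positive integers. If there exists an antipodal $k$-splitting of $Q_2^n$, then there exists an antipodal $k$-splitting of $Q_2^{n+1}$.
   Context: $Q_2^n=\{0,1\}^n$. For $0\le m\le n$, an $m$-face of $Q_2^n$ is given by a tuple $a=(a_1,\dots,a_n)\in\{0,1,*\}^n$ with exactly $m$ entries equal to $*$; it denotes the set $\{x\in Q_2^n : x_i=a_i \text{ whenever } a_i\in\{0,1\}\}$. The direction of a face is the set of positions of its asterisks; two faces are parallel if they have the same direction, and two parallel faces $a,b$ are antipodal if $b_i=1-a_i$ at every non-asterisk position $i$. An antipodal $k$-splitting of $Q_2^n$ is a collection of exactly $2^k$ $(n-k)$-faces whose union is $Q_2^n$ and which contains no pair of parallel non-antipodal faces. *)

theory Defs
  imports Main
begin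

text \<open>A face of Q_2^n is a list of length n over option bool; None plays the role of the asterisk.\<close>

type_synonym face = "bool option list"

definition is_face :: "nat \<Rightarrow> nat \<Rightarrow> face \<Rightarrow> bool" where
  "is_face n m a \<longleftrightarrow> length a = n \<and> card {i. i < n \<and> a ! i = None} = m"

definition cube :: "nat \<Rightarrow> bool list set" where
  "cube n = {x. length x = n}"

definition face_set :: "face \<Rightarrow> bool list set" where
  "face_set a = {x. length x = length a \<and> (\<forall>i < length a. \<forall>v. a ! i = Some v \<longrightarrow> x ! i = v)}"

definition direction :: "face \<Rightarrow> nat set" where
  "direction a = {i. i < length a \<and> a ! i = None}"

definition parallel :: "face \<Rightarrow> face \<Rightarrow> bool" where
  "parallel a b \<longleftrightarrow> length a = length b \<and> direction a = direction b"

definition antipodal :: "face \<Rightarrow> face \<Rightarrow> bool" where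
  "antipodal a b \<longleftrightarrow> parallel a b \<and>
     (\<forall>i < length a. \<forall>v. a ! i = Some v \<longrightarrow> b ! i = Some (\<not> v))"

definition antipodal_splitting :: "nat \<Rightarrow> nat \<Rightarrow> face set \<Rightarrow> bool" where
  "antipodal_splitting n k F \<longleftrightarrow>
     finite F \<and> card F = 2 ^ k \<and>
     (\<forall>a \<in> F. is_face n (n - k) a) \<and>
     (\<Union>a \<in> F. face_set a) = cube n \<and>
     (\<forall>a \<in> F. \<forall>b \<in> F. a \<noteq> b \<and> parallel a b \<longrightarrow> antipodal a b)"

end

theory Submission
  imports Defs
begin

definition ext :: "face \<Rightarrow> face" where "ext a = a @ [None]"

lemma length_ext[simp]: "length (ext a) = Suc (length a)" by (simp add: ext_def)

lemma nth_ext: "i < Suc (length a) \<Longrightarrow> ext a ! i = (if i < length a then a ! i else None)"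
  by (simp add: ext_def nth_append)

lemma dir_set: "{i. i < Suc (length a) \<and> ext a ! i = None} = insert (length a) {i. i < length a \<and> a ! i = None}"
  by (auto simp: nth_ext ext_def nth_append)

lemma direction_ext: "direction (ext a) = insert (length a) (direction a)"
  using dir_set[of a] by (simp add: direction_def ext_def)

lemma is_face_ext: "is_face n m a \<Longrightarrow> is_face (Suc n) (Suc m) (ext a)"
  unfolding is_face_def using dir_set[of a] by (simp add: ext_def)

lemma parallel_ext: "parallel (ext a) (ext b) \<longleftrightarrow> parallel a b"
proof
  assume p: "parallel (ext a) (ext b)"
  then have l: "length a = length b" by (simp add: parallel_def ext_def)
  have "direction a = direction b"
  proof -
    have "insert (length a) (direction a) = insert (length a) (direction b)"
      using p l by (simp add: parallel_def direction_ext)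
    moreover have "length a \<notin> direction a" "length a \<notin> direction b"
      using l by (auto simp: direction_def)
    ultimately show ?thesis by (metis insert_ident)
  qed
  with l show "parallel a b" by (simp add: parallel_def)
next
  assume "parallel a b" then show "parallel (ext a) (ext b)"
    by (simp add: parallel_def direction_ext)
qed

lemma antipodal_ext: "antipodal (ext a) (ext b) \<longleftrightarrow> antipodal a b"
proof -
  have "(\<forall>i < length (ext a). \<forall>v. ext a ! i = Some v \<longrightarrow> ext b ! i = Some (\<not> v)) \<longleftrightarrow>
        (\<forall>i < length a. \<forall>v. a ! i = Some v \<longrightarrow> b ! i = Some (\<not> v))" if "length a = length b"
    using that by (auto simp: ext_def nth_append less_Suc_eq)
  moreover have "parallel a b \<Longrightarrow> length a = length b" by (simp add: parallel_def)
  ultimately show ?thesis unfolding antipodal_def parallel_ext by blast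
qed

lemma face_set_ext: "face_set (ext a) = {x. length x = Suc (length a) \<and> butlast x \<in> face_set a}"
proof -
  have "x \<in> face_set (ext a) \<longleftrightarrow> length x = Suc (length a) \<and> butlast x \<in> face_set a" for x
  proof (cases "length x = Suc (length a)")
    case True
    then show ?thesis
      by (auto simp: face_set_def ext_def nth_append nth_butlast less_Suc_eq)
  qed (auto simp: face_set_def ext_def)
  then show ?thesis by blast
qed

theorem proposition1:
  fixes n k :: nat
  assumes "0 < k" and "k < n"
    and "\<exists>F. antipodal_splitting n k F"
  shows "\<exists>F. antipodal_splitting (Suc n) k F"
proof -
  obtain F where F: "antipodal_splitting n k F" using assms(3) by blast
  have inj: "inj ext" by (auto simp: inj_def ext_def)
  have len: "\<And>a. a \<in> F \<Longrightarrow> length a = n" using F by (auto simp: antipodal_splitting_def is_face_def)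
  have "antipodal_splitting (Suc n) k (ext ` F)"
    unfolding antipodal_splitting_def
  proof (intro conjI ballI impI)
    show "finite (ext ` F)" using F by (simp add: antipodal_splitting_def)
    show "card (ext ` F) = 2 ^ k" using F inj by (simp add: antipodal_splitting_def card_image inj_on_def inj_def)
  next
    fix a assume "a \<in> ext ` F"
    then obtain b where b: "b \<in> F" "a = ext b" by blast
    have "is_face n (n - k) b" using F b by (simp add: antipodal_splitting_def)
    then have "is_face (Suc n) (Suc (n - k)) (ext b)" by (rule is_face_ext)
    moreover have "Suc (n - k) = Suc n - k" using assms(2) by simp
    ultimately show "is_face (Suc n) (Suc n - k) a" using b by simp
  next
    show "(\<Union>a \<in> ext ` F. face_set a) = cube (Suc n)"
    proof
      show "(\<Union>a \<in> ext ` F. face_set a) \<subseteq> cube (Suc n)"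
        using len by (auto simp: face_set_ext cube_def)
    next
      show "cube (Suc n) \<subseteq> (\<Union>a \<in> ext ` F. face_set a)"
      proof
        fix x assume x: "x \<in> cube (Suc n)"
        then have "butlast x \<in> cube n" by (simp add: cube_def)
        then obtain a where a: "a \<in> F" "butlast x \<in> face_set a"
          using F unfolding antipodal_splitting_def by blast
        then have "x \<in> face_set (ext a)" using x len[OF a(1)] by (simp add: face_set_ext cube_def)
        then show "x \<in> (\<Union>a \<in> ext ` F. face_set a)" using a by blast
      qed
    qed
  next
    fix a b assume a: "a \<in> ext ` F" and b: "b \<in> ext ` F" and ab: "a \<noteq> b \<and> parallel a b"
    from a obtain a' where a': "a' \<in> F" "a = ext a'" by blast
    from b obtain b' where b': "b' \<in> F" "b = ext b'" by blast
    have "a' \<noteq> b'" using ab a' b' by auto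
    moreover have "parallel a' b'" using ab a' b' parallel_ext by simp
    ultimately have "antipodal a' b'" using F a' b' unfolding antipodal_splitting_def by blast
    then show "antipodal a b" using a' b' antipodal_ext by simp
  qed
  then show ?thesis by blast
qed

end
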